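(* Consider the noiseless least squares deterministic dynamics with exact line search described in the context. Then \[ \frac{\lambda_{\min}(K)}{\frac1d\mathrm{Tr}(K^2)}\le\gamma_t^{\mathrm{line}}\quad\text{for all }t\ge0. \] Moreover, suppose $K$ has only two distinct eigenvalues $\lambda_1>\lambda_2>0$, with $d/2$ eigenvalues equal to $\lambda_1$ and $d/2$ equal to $\lambda_2$. Then $\lim_{t\to\infty}\gamma_t^{\mathrm{line}}$ exists and \[ \frac{\lambda_{\min}(K)}{\frac1d\mathrm{Tr}(K^2)}\le\lim_{t\to\infty}\gamma_t^{\mathrm{line}}\le\frac{2\lambda_{\min}(K)}{\frac1d\mathrm{Tr}(K^2)}. \]
   Context: Noiseless least squares: $\mathcal R(X)=\frac12(X-X^\star)^TK(X-X^\star)$ with $K\in\mathbb R^{d\times d}$ symmetric positive definite with eigenpairs $(\lambda_i,\omega_i)$. Its deterministic equivalent dynamics under a learning-rate curve $\gamma_t$: functions $D_i^2(t)\ge0$ with $D_i^2(0)=d\langle X_0-X^\star,\omega_i\rangle^2$ solving $\frac{d}{dt}D_i^2(t)=-2\gamma_t\lambda_iD_i^2(t)+2\gamma_t^2\lambda_iR(t)$, where $R(t)=\frac1{2d}\sum_{i=1}^d\lambda_iD_i^2(t)$. Exact line search chooses at each time $\gamma_t=\gamma_t^{\mathrm{line}}\in\arg\min_\gamma\frac{d}{dt}R(t)$, which is \[\gamma_t^{\mathrm{line}}=\frac{\sum_{i=1}^d\lambda_i^2D_i^2(t)}{2\,\mathrm{Tr}(K^2)\,R(t)}.\] *)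

theory Defs
  imports "HOL-Analysis.Analysis"
begin

definition risk_de :: "('n::finite \<Rightarrow> real) \<Rightarrow> ('n \<Rightarrow> real \<Rightarrow> real) \<Rightarrow> real \<Rightarrow> real" where
  "risk_de lam Dsq t = (1 / (2 * real CARD('n))) * (\<Sum>i\<in>UNIV. lam i * Dsq i t)"

definition gamma_line :: "real^'n^'n \<Rightarrow> ('n::finite \<Rightarrow> real) \<Rightarrow> ('n \<Rightarrow> real \<Rightarrow> real) \<Rightarrow> real \<Rightarrow> real" where
  "gamma_line K lam Dsq t = (\<Sum>i\<in>UNIV. (lam i)\<^sup>2 * Dsq i t) / (2 * trace (K ** K) * risk_de lam Dsq t)"

text \<open>Smallest eigenvalue of K, read off from the eigenpairs (lam i, omega i).\<close>
definition lambda_min :: "('n::finite \<Rightarrow> real) \<Rightarrow> real" where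
  "lambda_min lam = Min (range lam)"

end

theory Submission
  imports Defs
begin


lemma mono_within0:
  fixes g g' :: "real \<Rightarrow> real"
  assumes d: "\<And>s. s \<ge> 0 \<Longrightarrow> (g has_real_derivative g' s) (at s within {0..})"
    and p: "\<And>s. s \<ge> 0 \<Longrightarrow> g' s \<ge> 0" and t: "t \<ge> 0"
  shows "g 0 \<le> g t"
proof (rule DERIV_nonneg_imp_increasing_open[OF t])
  fix x :: real assume x: "0 < x" "x < t"
  have "(g has_real_derivative g' x) (at x within {0<..})"
    using x by (intro DERIV_subset[OF d[of x]]) auto
  then have "(g has_real_derivative g' x) (at x)"
    using at_within_open[of x "{0<..}"] x by auto
  then show "\<exists>y. DERIV g x :> y \<and> y \<ge> 0" using p[of x] x by auto
next
  show "continuous_on {0..t} g"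
    unfolding continuous_on_eq_continuous_within
  proof
    fix x assume "x \<in> {0..t}"
    then have "continuous (at x within {0..}) g" using DERIV_continuous[OF d[of x]] by auto
    then show "continuous (at x within {0..t}) g"
      by (rule continuous_within_subset) auto
  qed
qed

lemma gronwall_ge:
  fixes f f' :: "real \<Rightarrow> real"
  assumes d: "\<And>s. s \<ge> 0 \<Longrightarrow> (f has_real_derivative f' s) (at s within {0..})"
    and p: "\<And>s. s \<ge> 0 \<Longrightarrow> f' s \<ge> - c * f s" and t: "t \<ge> 0"
  shows "f 0 * exp (- c * t) \<le> f t"
proof -
  have "(\<lambda>s. f s * exp (c * s)) 0 \<le> (\<lambda>s. f s * exp (c * s)) t"
  proof (rule mono_within0[OF _ _ t])
    fix s :: real assume s: "s \<ge> 0"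
    show "((\<lambda>s. f s * exp (c * s)) has_real_derivative (f' s * exp (c * s) + f s * (c * exp (c * s)))) (at s within {0..})"
      by (rule derivative_eq_intros d[OF s] refl | simp)+
    have "f' s + c * f s \<ge> 0" using p[OF s] by simp
    then have "(f' s + c * f s) * exp (c * s) \<ge> 0" by simp
    then show "f' s * exp (c * s) + f s * (c * exp (c * s)) \<ge> 0" by (simp add: algebra_simps)
  qed
  then have "f 0 \<le> f t * exp (c * t)" by simp
  then have "f 0 * exp (- c * t) \<le> f t * exp (c * t) * exp (- c * t)" by simp
  also have "\<dots> = f t" by (simp add: mult.assoc flip: exp_add)
  finally show ?thesis .
qed

lemma gronwall_le:
  fixes f f' :: "real \<Rightarrow> real"
  assumes d: "\<And>s. s \<ge> 0 \<Longrightarrow> (f has_real_derivative f' s) (at s within {0..})"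
    and p: "\<And>s. s \<ge> 0 \<Longrightarrow> f' s \<le> - c * f s" and t: "t \<ge> 0"
  shows "f t \<le> f 0 * exp (- c * t)"
proof -
  have "(- f 0) * exp (- c * t) \<le> - f t"
  proof (rule gronwall_ge[of "\<lambda>s. - f s" "\<lambda>s. - f' s" c t])
    fix s :: real assume s: "s \<ge> 0"
    show "((\<lambda>s. - f s) has_real_derivative - f' s) (at s within {0..})"
      using d[OF s] by (rule DERIV_minus)
    show "- f' s \<ge> - c * (- f s)" using p[OF s] by simp
  qed (rule t)
  then show ?thesis by simp
qed



lemma rows_orthonormal:
  fixes omega :: "'n::finite \<Rightarrow> real^'n"
  assumes orthonormal: "\<And>i j. omega i \<bullet> omega j = (if i = j then 1 else 0)"
  shows "(\<Sum>i\<in>UNIV. omega i $ k * omega i $ l) = (if k = l then 1 else 0)"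
proof -
  define Q :: "real^'n^'n" where "Q = (\<chi> k i. omega i $ k)"
  have o: "(\<Sum>k\<in>UNIV. omega i $ k * omega j $ k) = (if i = j then 1 else 0)" for i j
    using orthonormal[of i j] unfolding inner_vec_def inner_real_def .
  have e: "(transpose Q ** Q) $ i $ j = mat 1 $ i $ j" for i j
  proof -
    have "(transpose Q ** Q) $ i $ j = (\<Sum>k\<in>UNIV. omega i $ k * omega j $ k)"
      by (simp add: Q_def transpose_def matrix_matrix_mult_def)
    also have "\<dots> = mat 1 $ i $ j" unfolding o by (simp add: mat_def)
    finally show ?thesis .
  qed
  have "transpose Q ** Q = mat 1"
    using e by (simp add: vec_eq_iff)
  then have "Q ** transpose Q = mat 1" using matrix_left_right_inverse by blast
  then have "(Q ** transpose Q) $ k $ l = mat 1 $ k $ l" by simp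
  moreover have "(Q ** transpose Q) $ k $ l = (\<Sum>i\<in>UNIV. omega i $ k * omega i $ l)"
    unfolding Q_def transpose_def matrix_matrix_mult_def by simp
  moreover have "mat 1 $ k $ l = (if k = l then 1 else (0::real))"
    unfolding mat_def by simp
  ultimately show ?thesis by simp
qed

lemma trace_basis:
  fixes omega :: "'n::finite \<Rightarrow> real^'n" and A :: "real^'n^'n"
  assumes orthonormal: "\<And>i j. omega i \<bullet> omega j = (if i = j then 1 else 0)"
  shows "trace A = (\<Sum>i\<in>UNIV. omega i \<bullet> (A *v omega i))"
proof -
  have "(\<Sum>i\<in>UNIV. omega i \<bullet> (A *v omega i))
      = (\<Sum>i\<in>UNIV. \<Sum>k\<in>UNIV. \<Sum>l\<in>UNIV. A $ k $ l * (omega i $ k * omega i $ l))"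
    by (simp add: inner_vec_def matrix_vector_mult_def sum_distrib_left inner_real_def algebra_simps)
  also have "\<dots> = (\<Sum>k\<in>UNIV. \<Sum>i\<in>UNIV. \<Sum>l\<in>UNIV. A $ k $ l * (omega i $ k * omega i $ l))"
    by (rule sum.swap)
  also have "\<dots> = (\<Sum>k\<in>UNIV. \<Sum>l\<in>UNIV. \<Sum>i\<in>UNIV. A $ k $ l * (omega i $ k * omega i $ l))"
    by (rule sum.cong[OF refl], rule sum.swap)
  also have "\<dots> = (\<Sum>k\<in>UNIV. \<Sum>l\<in>UNIV. A $ k $ l * (\<Sum>i\<in>UNIV. omega i $ k * omega i $ l))"
    by (simp add: sum_distrib_left)
  also have "\<dots> = (\<Sum>k\<in>UNIV. A $ k $ k)"
    by (simp add: rows_orthonormal[OF orthonormal] if_distrib cong: if_cong)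
  finally show ?thesis by (simp add: trace_def)
qed

lemma nonzero_coord:
  fixes omega :: "'n::finite \<Rightarrow> real^'n"
  assumes orthonormal: "\<And>i j. omega i \<bullet> omega j = (if i = j then 1 else 0)"
    and "x \<noteq> 0"
  shows "\<exists>i. x \<bullet> omega i \<noteq> 0"
proof (rule ccontr)
  assume "\<not> ?thesis"
  then have z: "\<And>i. x \<bullet> omega i = 0" by auto
  have "x $ k = 0" for k
  proof -
    have "x $ k = (\<Sum>l\<in>UNIV. x $ l * (if k = l then 1 else 0))"
      by (simp add: if_distrib cong: if_cong)
    also have "\<dots> = (\<Sum>l\<in>UNIV. \<Sum>i\<in>UNIV. x $ l * (omega i $ k * omega i $ l))"
      by (simp add: rows_orthonormal[OF assms(1), symmetric] sum_distrib_left)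
    also have "\<dots> = (\<Sum>i\<in>UNIV. omega i $ k * (x \<bullet> omega i))"
      by (subst sum.swap) (simp add: inner_vec_def inner_real_def sum_distrib_left mult.commute mult.left_commute)
    also have "\<dots> = 0" by (simp add: z)
    finally show ?thesis .
  qed
  then have "x = 0" by (simp add: vec_eq_iff)
  with assms(2) show False by simp
qed



lemma alg_q:
  fixes P N T d S a b :: real
  assumes "P \<noteq> 0" "T \<noteq> 0" "d \<noteq> 0" "S \<noteq> 0"
  shows "((-2*((d/T)*N/P)*((a+b)*N - a*b*P) + 2*((d/T)*N/P)^2*(P/(2*d))*((a^3+b^3)*T/S)) * P
          - N*(-2*((d/T)*N/P)*N + 2*((d/T)*N/P)^2*(P/(2*d))*T)) / (P*P)
       = (d/T)*(N/P)*((N/P)^2 + ((a^3+b^3)/S - 2*(a+b))*(N/P) + 2*a*b)"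
  using assms by (simp add: field_simps power2_eq_square power3_eq_cube)

lemma hh_l2:
  fixes a b :: real assumes "a^2+b^2 > 0"
  shows "b^2 + ((a^3+b^3)/(a^2+b^2) - 2*(a+b))*b + 2*a*b = a^2*b*(a-b)/(a^2+b^2)"
proof -
  have pos: "a*a+b*b > 0" using assms by (simp add: power2_eq_square)
  have "a*a+b*b \<noteq> 0" using pos by linarith
  then show ?thesis unfolding power2_eq_square power3_eq_cube by (simp add: field_simps)
qed

lemma hh_l1:
  fixes a b :: real assumes "a^2+b^2 > 0"
  shows "a^2 + ((a^3+b^3)/(a^2+b^2) - 2*(a+b))*a + 2*a*b = - a*b^2*(a-b)/(a^2+b^2)"
proof -
  have pos: "a*a+b*b > 0" using assms by (simp add: power2_eq_square)
  have "a*a+b*b \<noteq> 0" using pos by linarith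
  then show ?thesis unfolding power2_eq_square power3_eq_cube by (simp add: field_simps)
qed

lemma hh_2l2:
  fixes a b :: real assumes "a^2+b^2 > 0"
  shows "(2*b)^2 + ((a^3+b^3)/(a^2+b^2) - 2*(a+b))*(2*b) + 2*a*b = - 2*b^3*(a-b)/(a^2+b^2)"
proof -
  have pos: "a*a+b*b > 0" using assms by (simp add: power2_eq_square)
  have "a*a+b*b \<noteq> 0" using pos by linarith
  then show ?thesis unfolding power2_eq_square power3_eq_cube by (simp add: field_simps)
qed

lemma exp_decay: "c > 0 \<Longrightarrow> ((\<lambda>t::real. A * exp (- c * t)) \<longlongrightarrow> 0) at_top"
proof -
  assume c: "c > 0"
  have "filterlim (\<lambda>t::real. - c * t) at_bot at_top"
    using c by (intro filterlim_tendsto_neg_mult_at_bot[where c="-c"]) (auto intro: filterlim_ident)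
  then have "((\<lambda>t. exp (- c * t)) \<longlongrightarrow> 0) at_top"
    using exp_at_bot filterlim_compose by blast
  then show ?thesis using tendsto_mult_right_zero by blast
qed



theorem proposition1:
  fixes K :: "real^'n^'n"
    and lam :: "'n \<Rightarrow> real"
    and omega :: "'n \<Rightarrow> real^'n"
    and X0 Xstar :: "real^'n"
    and Dsq :: "'n \<Rightarrow> real \<Rightarrow> real"
  assumes K_sym: "transpose K = K"
    and K_posdef: "\<And>x. x \<noteq> 0 \<Longrightarrow> x \<bullet> (K *v x) > 0"
    and eig: "\<And>i. K *v omega i = lam i *\<^sub>R omega i"
    and orthonormal: "\<And>i j. omega i \<bullet> omega j = (if i = j then 1 else 0)"
    and X0_ne: "X0 \<noteq> Xstar"
    and D_nonneg: "\<And>i t. t \<ge> 0 \<Longrightarrow> Dsq i t \<ge> 0"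
    and D_init: "\<And>i. Dsq i 0 = real CARD('n) * ((X0 - Xstar) \<bullet> omega i)\<^sup>2"
    and D_ode: "\<And>i t. t \<ge> 0 \<Longrightarrow>
        ((Dsq i) has_real_derivative
           (- 2 * gamma_line K lam Dsq t * lam i * Dsq i t
            + 2 * (gamma_line K lam Dsq t)\<^sup>2 * lam i * risk_de lam Dsq t))
        (at t within {0..})"
  shows "(\<forall>t\<ge>0. lambda_min lam / (trace (K ** K) / real CARD('n)) \<le> gamma_line K lam Dsq t)
    \<and> ((\<exists>l1 l2. l1 > l2 \<and> l2 > 0 \<and> (\<forall>i. lam i = l1 \<or> lam i = l2)
          \<and> 2 * card {i. lam i = l1} = CARD('n) \<and> 2 * card {i. lam i = l2} = CARD('n))
       \<longrightarrow> (\<exists>L. (gamma_line K lam Dsq \<longlongrightarrow> L) at_top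
             \<and> lambda_min lam / (trace (K ** K) / real CARD('n)) \<le> L
             \<and> L \<le> 2 * lambda_min lam / (trace (K ** K) / real CARD('n))))"
  
proof -
  define d where "d = real CARD('n)"
  define T where "T = trace (K ** K)"
  define N where "N = (\<lambda>t. \<Sum>i\<in>UNIV. (lam i)\<^sup>2 * Dsq i t)"
  define P where "P = (\<lambda>t. \<Sum>i\<in>UNIV. lam i * Dsq i t)"
  define g where "g = gamma_line K lam Dsq"
  define R where "R = risk_de lam Dsq"
  have d_pos: "d > 0" unfolding d_def by simp
  have lam_pos: "lam i > 0" for i
  proof -
    have "omega i \<noteq> 0" using orthonormal[of i i] by auto
    then have "0 < omega i \<bullet> (K *v omega i)" by (rule K_posdef)
    also have "\<dots> = lam i" using orthonormal[of i i] by (simp add: eig)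
    finally show ?thesis .
  qed
  have T_eq: "T = (\<Sum>i\<in>UNIV. (lam i)\<^sup>2)"
  proof -
    have "T = (\<Sum>i\<in>UNIV. omega i \<bullet> ((K ** K) *v omega i))"
      unfolding T_def by (rule trace_basis[OF orthonormal])
    also have "\<dots> = (\<Sum>i\<in>UNIV. (lam i)\<^sup>2)"
    proof (rule sum.cong[OF refl])
      fix i
      have "(K ** K) *v omega i = (lam i * lam i) *\<^sub>R omega i"
        by (simp add: matrix_vector_mul_assoc[symmetric] eig matrix_vector_mult_scaleR)
      then show "omega i \<bullet> ((K ** K) *v omega i) = (lam i)\<^sup>2"
        using orthonormal[of i i] by (simp add: power2_eq_square)
    qed
    finally show ?thesis .
  qed
  have T_pos: "T > 0" unfolding T_eq
    using lam_pos by (intro sum_pos) (auto simp: less_imp_neq[symmetric])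
  have R_eq: "R t = P t / (2 * d)" for t
    unfolding R_def risk_de_def P_def d_def by simp
  have g_eq: "g t = d * N t / (T * P t)" for t
    unfolding g_def gamma_line_def risk_de_def N_def P_def T_def[symmetric] d_def
    by (simp add: field_simps)
  have P_nn: "P t \<ge> 0" if "t \<ge> 0" for t
    unfolding P_def using D_nonneg[OF that] lam_pos by (intro sum_nonneg) (simp add: less_imp_le)
  define lmin where "lmin = lambda_min lam"
  define lmax where "lmax = Max (range lam)"
  have lmin_le: "lmin \<le> lam i" for i unfolding lmin_def lambda_min_def by simp
  have lmax_ge: "lam i \<le> lmax" for i unfolding lmax_def by simp
  have lmin_pos: "lmin > 0"
  proof -
    have "lmin \<in> range lam" unfolding lmin_def lambda_min_def by (rule Min_in) auto
    then show ?thesis using lam_pos by auto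
  qed
  have N_ge: "N t \<ge> lmin * P t" if "t \<ge> 0" for t
    unfolding N_def P_def sum_distrib_left
  proof (rule sum_mono)
    fix i
    have "lmin * (lam i * Dsq i t) \<le> lam i * (lam i * Dsq i t)"
      using lmin_le[of i] lam_pos[of i] D_nonneg[OF that, of i]
      by (intro mult_right_mono) auto
    then show "lmin * (lam i * Dsq i t) \<le> (lam i)\<^sup>2 * Dsq i t"
      by (simp add: power2_eq_square mult.assoc)
  qed
  have N_le: "N t \<le> lmax * P t" if "t \<ge> 0" for t
    unfolding N_def P_def sum_distrib_left
  proof (rule sum_mono)
    fix i
    have "lam i * (lam i * Dsq i t) \<le> lmax * (lam i * Dsq i t)"
      using lmax_ge[of i] lam_pos[of i] D_nonneg[OF that, of i]
      by (intro mult_right_mono) auto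
    then show "(lam i)\<^sup>2 * Dsq i t \<le> lmax * (lam i * Dsq i t)"
      by (simp add: power2_eq_square mult.assoc)
  qed
  define G where "G = d * lmax / T"
  have g_bounds: "0 \<le> g t \<and> g t \<le> G" if "t \<ge> 0" for t
  proof (cases "P t = 0")
    case True
    then show ?thesis unfolding g_eq G_def using d_pos T_pos lmin_pos lmax_ge[of undefined] lam_pos[of undefined]
      by simp
  next
    case False
    then have Pp: "P t > 0" using P_nn[OF that] by simp
    have "N t \<ge> 0" using N_ge[OF that] lmin_pos Pp by (smt (verit) mult_pos_pos)
    moreover have "d * N t / (T * P t) \<le> d * (lmax * P t) / (T * P t)"
      using N_le[OF that] d_pos T_pos Pp by (intro divide_right_mono mult_left_mono) auto
    ultimately show ?thesis unfolding g_eq G_def using d_pos T_pos Pp by simp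
  qed
  have R_nn: "R t \<ge> 0" if "t \<ge> 0" for t using P_nn[OF that] d_pos by (simp add: R_eq)
  obtain i0 where i0: "(X0 - Xstar) \<bullet> omega i0 \<noteq> 0"
    using nonzero_coord[OF orthonormal, of "X0 - Xstar"] X0_ne by auto
  have D0: "Dsq i0 0 > 0" using i0 d_pos by (simp add: D_init d_def[symmetric])
  have Di0: "Dsq i0 t > 0" if t: "t \<ge> 0" for t
  proof -
    have "Dsq i0 0 * exp (- (2 * G * lam i0) * t) \<le> Dsq i0 t"
    proof (rule gronwall_ge[OF _ _ t])
      fix s :: real assume s: "s \<ge> 0"
      show "(Dsq i0 has_real_derivative (- 2 * g s * lam i0 * Dsq i0 s + 2 * (g s)\<^sup>2 * lam i0 * R s)) (at s within {0..})"
        unfolding g_def R_def by (rule D_ode[OF s])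
      have a: "2 * (g s)\<^sup>2 * lam i0 * R s \<ge> 0" using R_nn[OF s] lam_pos[of i0] by simp
      have "g s * (lam i0 * Dsq i0 s) \<le> G * (lam i0 * Dsq i0 s)"
        using g_bounds[OF s] lam_pos[of i0] D_nonneg[OF s, of i0] by (intro mult_right_mono) auto
      then show "- (2 * G * lam i0) * Dsq i0 s \<le> - 2 * g s * lam i0 * Dsq i0 s + 2 * (g s)\<^sup>2 * lam i0 * R s"
        using a by (simp add: algebra_simps)
    qed
    moreover have "Dsq i0 0 * exp (- (2 * G * lam i0) * t) > 0" using D0 by simp
    ultimately show ?thesis by simp
  qed
  have P_pos: "P t > 0" if t: "t \<ge> 0" for t
  proof -
    have "lam i0 * Dsq i0 t \<le> P t" unfolding P_def
      using D_nonneg[OF t] lam_pos by (intro member_le_sum) (auto simp: less_imp_le)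
    moreover have "lam i0 * Dsq i0 t > 0" using Di0[OF t] lam_pos[of i0] by simp
    ultimately show ?thesis by simp
  qed
  have part1: "lmin / (T / d) \<le> g t" if t: "t \<ge> 0" for t
  proof -
    have "lmin / (T / d) = d * (lmin * P t) / (T * P t)"
      using P_pos[OF t] d_pos T_pos by (simp add: field_simps)
    also have "\<dots> \<le> d * N t / (T * P t)"
      using N_ge[OF t] P_pos[OF t] d_pos T_pos by (intro divide_right_mono mult_left_mono) auto
    finally show ?thesis by (simp add: g_eq)
  qed
  show ?thesis
  proof (intro conjI allI impI)
    fix t :: real assume "t \<ge> 0"
    then show "lambda_min lam / (trace (K ** K) / real CARD('n)) \<le> gamma_line K lam Dsq t"
      using part1 unfolding lmin_def T_def d_def g_def by blast
  next
    assume "\<exists>l1 l2. l1 > l2 \<and> l2 > 0 \<and> (\<forall>i. lam i = l1 \<or> lam i = l2)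
          \<and> 2 * card {i. lam i = l1} = CARD('n) \<and> 2 * card {i. lam i = l2} = CARD('n)"
    then obtain l1 l2 where l12: "l1 > l2" "l2 > 0" and lam12: "\<And>i. lam i = l1 \<or> lam i = l2"
      and c1: "2 * card {i. lam i = l1} = CARD('n)" and c2: "2 * card {i. lam i = l2} = CARD('n)"
      by blast

    define m where "m = card {i. lam i = l1}"
    have m2: "card {i. lam i = l2} = m" using c1 c2 unfolding m_def by simp
    have m_pos: "real m > 0" using c1 unfolding m_def[symmetric] by (cases "m = 0") auto
    have sum_split: "(\<Sum>i\<in>UNIV. f (lam i)) = real m * (f l1 + f l2)" for f :: "real \<Rightarrow> real"
    proof -
      have U: "(UNIV :: 'n set) = {i. lam i = l1} \<union> {i. lam i = l2}" using lam12 by auto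
      have "(\<Sum>i\<in>UNIV. f (lam i)) = (\<Sum>i\<in>{i. lam i = l1}. f (lam i)) + (\<Sum>i\<in>{i. lam i = l2}. f (lam i))"
        unfolding U using l12 by (intro sum.union_disjoint) auto
      also have "\<dots> = (\<Sum>i\<in>{i. lam i = l1}. f l1) + (\<Sum>i\<in>{i. lam i = l2}. f l2)"
        by simp
      also have "\<dots> = real m * (f l1 + f l2)" using m2 by (simp add: m_def algebra_simps)
      finally show ?thesis .
    qed
    define S where "S = l1\<^sup>2 + l2\<^sup>2"
    have S_pos: "S > 0" unfolding S_def using l12 by (simp add: add_pos_pos)
    have T_m: "T = real m * S" unfolding T_eq S_def using sum_split[of "\<lambda>x. x\<^sup>2"] by simp
    have L3: "(\<Sum>i\<in>UNIV. lam i ^ 3) = (l1^3 + l2^3) * T / S"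
      using sum_split[of "\<lambda>x. x^3"] S_pos by (simp add: T_m)
    have lmin_eq: "lmin = l2"
    proof -
      have "lmin \<in> range lam" unfolding lmin_def lambda_min_def by (rule Min_in) auto
      then have "lmin = l1 \<or> lmin = l2" using lam12 by auto
      moreover have "card {i. lam i = l2} > 0" using m2 m_pos by simp
      then have "{i. lam i = l2} \<noteq> {}" using card_gt_0_iff by blast
      then obtain j where "lam j = l2" by auto
      then have "lmin \<le> l2" using lmin_le[of j] by simp
      ultimately show ?thesis using l12 by auto
    qed
    have lmax_le: "lmax \<le> l1"
    proof -
      have "lmax \<in> range lam" unfolding lmax_def by (rule Max_in) auto
      then obtain x where "lmax = lam x" by auto
      then show ?thesis using lam12[of x] l12 by auto
    qed
    define Dd where "Dd = (\<lambda>i t. - 2 * g t * lam i * Dsq i t + 2 * (g t)\<^sup>2 * lam i * R t)"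
    have D_ode': "(Dsq i has_real_derivative Dd i t) (at t within {0..})" if "t \<ge> 0" for i t
      unfolding Dd_def g_def R_def by (rule D_ode[OF that])
    define P' where "P' = (\<lambda>t. \<Sum>i\<in>UNIV. lam i * Dd i t)"
    define N' where "N' = (\<lambda>t. \<Sum>i\<in>UNIV. (lam i)\<^sup>2 * Dd i t)"
    have dP: "(P has_real_derivative P' t) (at t within {0..})" if "t \<ge> 0" for t
      unfolding P_def P'_def by (intro DERIV_sum DERIV_cmult D_ode'[OF that])
    have dN: "(N has_real_derivative N' t) (at t within {0..})" if "t \<ge> 0" for t
      unfolding N_def N'_def by (intro DERIV_sum DERIV_cmult D_ode'[OF that])
    have P'_eq: "P' t = - 2 * g t * N t + 2 * (g t)\<^sup>2 * R t * T" for t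
    proof -
      have "P' t = (\<Sum>i\<in>UNIV. (- 2 * g t) * ((lam i)\<^sup>2 * Dsq i t) + (2 * (g t)\<^sup>2 * R t) * (lam i)\<^sup>2)"
        unfolding P'_def Dd_def by (rule sum.cong) (auto simp: algebra_simps power2_eq_square)
      also have "\<dots> = - 2 * g t * N t + 2 * (g t)\<^sup>2 * R t * T"
        unfolding sum.distrib sum_distrib_left[symmetric] N_def T_eq by simp
      finally show ?thesis .
    qed
    have M3: "(\<Sum>i\<in>UNIV. lam i ^ 3 * Dsq i t) = (l1 + l2) * N t - l1 * l2 * P t" for t
    proof -
      have "(\<Sum>i\<in>UNIV. lam i ^ 3 * Dsq i t) = (\<Sum>i\<in>UNIV. (l1 + l2) * ((lam i)\<^sup>2 * Dsq i t) - (l1 * l2) * (lam i * Dsq i t))"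
      proof (rule sum.cong[OF refl])
        fix i show "lam i ^ 3 * Dsq i t = (l1 + l2) * ((lam i)\<^sup>2 * Dsq i t) - (l1 * l2) * (lam i * Dsq i t)"
          using lam12[of i] by (auto simp: algebra_simps power2_eq_square power3_eq_cube)
      qed
      also have "\<dots> = (l1 + l2) * N t - l1 * l2 * P t"
        unfolding sum_subtractf sum_distrib_left[symmetric] N_def P_def by simp
      finally show ?thesis .
    qed
    have N'_eq: "N' t = - 2 * g t * ((l1 + l2) * N t - l1 * l2 * P t) + 2 * (g t)\<^sup>2 * R t * ((l1^3 + l2^3) * T / S)" for t
    proof -
      have "N' t = (\<Sum>i\<in>UNIV. (- 2 * g t) * (lam i ^ 3 * Dsq i t) + (2 * (g t)\<^sup>2 * R t) * lam i ^ 3)"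
        unfolding N'_def Dd_def by (rule sum.cong) (auto simp: algebra_simps power2_eq_square power3_eq_cube)
      also have "\<dots> = - 2 * g t * ((l1 + l2) * N t - l1 * l2 * P t) + 2 * (g t)\<^sup>2 * R t * ((l1^3 + l2^3) * T / S)"
        unfolding sum.distrib sum_distrib_left[symmetric] M3 L3 by simp
      finally show ?thesis .
    qed
    define \<theta> where "\<theta> = d / T"
    have th_pos: "\<theta> > 0" unfolding \<theta>_def using d_pos T_pos by simp
    define cc where "cc = (l1^3 + l2^3) / S - 2 * (l1 + l2)"
    define hh where "hh = (\<lambda>x::real. x\<^sup>2 + cc * x + 2 * l1 * l2)"
    define q where "q = (\<lambda>t. N t / P t)"
    have g_q: "g t = \<theta> * q t" for t unfolding g_eq \<theta>_def q_def by simp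
    have dq: "(q has_real_derivative (\<theta> * q t * hh (q t))) (at t within {0..})" if t: "t \<ge> 0" for t
    proof -
      have Pne: "P t \<noteq> 0" using P_pos[OF t] by simp
      have "(q has_real_derivative (N' t * P t - N t * P' t) / (P t * P t)) (at t within {0..})"
        unfolding q_def by (rule DERIV_divide[OF dN[OF t] dP[OF t] Pne])
      moreover have "(N' t * P t - N t * P' t) / (P t * P t) = \<theta> * q t * hh (q t)"
      proof -
        have ge: "g t = (d/T) * N t / P t" unfolding g_eq by simp
        show ?thesis
          unfolding N'_eq P'_eq ge R_eq hh_def cc_def q_def \<theta>_def
          by (rule alg_q) (use Pne T_pos d_pos S_pos in auto)
      qed
      ultimately show ?thesis by simp
    qed
    have hh_l2': "hh l2 > 0"
      using hh_l2[of l1 l2] S_pos l12 unfolding hh_def cc_def S_def by (simp add: divide_pos_pos)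
    have hh_l1': "hh l1 < 0"
      using hh_l1[of l1 l2] S_pos l12 unfolding hh_def cc_def S_def by (simp add: divide_pos_pos)
    have hh_2l2': "hh (2 * l2) < 0"
      using hh_2l2[of l1 l2] S_pos l12 unfolding hh_def cc_def S_def by (simp add: divide_pos_pos)
    define u where "u = min l1 (2 * l2)"
    have hh_u: "hh u < 0" unfolding u_def min_def using hh_l1' hh_2l2' by auto
    have "\<exists>x. l2 \<le> x \<and> x \<le> u \<and> hh x = 0"
      using hh_u hh_l2' l12 unfolding u_def
      by (intro IVT2) (auto simp: hh_def intro!: continuous_intros)
    then obtain qs where qs: "l2 \<le> qs" "qs \<le> u" "hh qs = 0" by blast
    have qs_l1: "qs < l1" using qs hh_l1' l12 unfolding u_def by (cases "qs = l1") auto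
    have qs_2: "qs \<le> 2 * l2" using qs unfolding u_def by simp
    have hh_fac: "hh x = (x - qs) * (x + qs + cc)" for x
      using qs(3) unfolding hh_def by (simp add: algebra_simps power2_eq_square)
    define \<kappa> where "\<kappa> = - (l1 + qs + cc)"
    have kappa_pos: "\<kappa> > 0"
    proof -
      have "(l1 - qs) * (l1 + qs + cc) < 0" using hh_l1' hh_fac[of l1] by simp
      then show ?thesis unfolding \<kappa>_def using qs_l1 by (simp add: mult_less_0_iff)
    qed
    have q_lo: "l2 \<le> q t" if t: "t \<ge> 0" for t
      using N_ge[OF t] P_pos[OF t] unfolding q_def lmin_eq by (simp add: pos_le_divide_eq)
    have q_hi: "q t \<le> l1" if t: "t \<ge> 0" for t
    proof -
      have "N t \<le> l1 * P t" using N_le[OF t] lmax_le P_nn[OF t] by (smt (verit) mult_right_mono)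
      then show ?thesis using P_pos[OF t] unfolding q_def by (simp add: pos_divide_le_eq)
    qed
    define V where "V = (\<lambda>t. (q t - qs)\<^sup>2)"
    define c where "c = 2 * \<theta> * l2 * \<kappa>"
    have c_pos: "c > 0" unfolding c_def using th_pos l12 kappa_pos by simp
    have dV: "(V has_real_derivative (2 * (q t - qs) * (\<theta> * q t * hh (q t)))) (at t within {0..})" if t: "t \<ge> 0" for t
      unfolding V_def by (rule derivative_eq_intros dq[OF t] refl | simp)+
    have V_bound: "V t \<le> V 0 * exp (- c * t)" if t: "t \<ge> 0" for t
    proof (rule gronwall_le[OF dV _ t])
      fix s :: real assume s: "s \<ge> 0"
      define A where "A = 2 * \<theta> * q s * (q s - qs)\<^sup>2"
      define A0 where "A0 = 2 * \<theta> * l2 * (q s - qs)\<^sup>2"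
      have eq: "2 * (q s - qs) * (\<theta> * q s * hh (q s)) = A * (q s + qs + cc)"
        unfolding A_def hh_fac by (simp add: algebra_simps power2_eq_square)
      have A0_nn: "A0 \<ge> 0" unfolding A0_def using th_pos l12 by simp
      have AA0: "A0 \<le> A" unfolding A0_def A_def using q_lo[OF s] th_pos
        by (intro mult_right_mono mult_left_mono) auto
      have "A * (q s + qs + cc) \<le> A * (- \<kappa>)"
        using q_hi[OF s] A0_nn AA0 unfolding \<kappa>_def by (intro mult_left_mono) auto
      also have "\<dots> \<le> A0 * (- \<kappa>)" using AA0 kappa_pos by (intro mult_right_mono_neg) auto
      also have "\<dots> = - c * V s" unfolding A0_def c_def V_def by simp
      finally show "2 * (q s - qs) * (\<theta> * q s * hh (q s)) \<le> - c * V s" unfolding eq .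
    qed
    have V_lim: "(V \<longlongrightarrow> 0) at_top"
    proof (rule tendsto_sandwich[of "\<lambda>_. 0" V at_top "\<lambda>t. V 0 * exp (- c * t)"])
      show "\<forall>\<^sub>F t in at_top. 0 \<le> V t" unfolding V_def by simp
      show "\<forall>\<^sub>F t in at_top. V t \<le> V 0 * exp (- c * t)"
        using eventually_ge_at_top[of "0::real"] by eventually_elim (rule V_bound)
      show "((\<lambda>t. V 0 * exp (- c * t)) \<longlongrightarrow> 0) at_top" by (rule exp_decay[OF c_pos])
    qed simp
    have "((\<lambda>t. sqrt (V t)) \<longlongrightarrow> sqrt 0) at_top" by (intro tendsto_real_sqrt V_lim)
    then have "((\<lambda>t. \<bar>q t - qs\<bar>) \<longlongrightarrow> 0) at_top" unfolding V_def by simp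
    then have "((\<lambda>t. q t - qs) \<longlongrightarrow> 0) at_top" by (simp add: tendsto_rabs_zero_iff)
    then have "(q \<longlongrightarrow> qs) at_top" by (rule LIM_zero_cancel)
    then have "((\<lambda>t. \<theta> * q t) \<longlongrightarrow> \<theta> * qs) at_top" by (intro tendsto_mult_left)
    then have glim: "(g \<longlongrightarrow> \<theta> * qs) at_top" unfolding g_q[symmetric] by simp
    show "\<exists>L. (gamma_line K lam Dsq \<longlongrightarrow> L) at_top
             \<and> lambda_min lam / (trace (K ** K) / real CARD('n)) \<le> L
             \<and> L \<le> 2 * lambda_min lam / (trace (K ** K) / real CARD('n))"
    proof (intro exI conjI)
      show "(gamma_line K lam Dsq \<longlongrightarrow> \<theta> * qs) at_top" using glim unfolding g_def .
      have e1: "lambda_min lam / (trace (K ** K) / real CARD('n)) = \<theta> * l2"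
        unfolding lmin_def[symmetric] T_def[symmetric] d_def[symmetric] lmin_eq \<theta>_def by simp
      show "lambda_min lam / (trace (K ** K) / real CARD('n)) \<le> \<theta> * qs"
        unfolding e1 using qs(1) th_pos by simp
      have e2: "2 * lambda_min lam / (trace (K ** K) / real CARD('n)) = \<theta> * (2 * l2)"
        unfolding lmin_def[symmetric] T_def[symmetric] d_def[symmetric] lmin_eq \<theta>_def by simp
      show "\<theta> * qs \<le> 2 * lambda_min lam / (trace (K ** K) / real CARD('n))"
        unfolding e2 using qs_2 th_pos by simp
    qed
  qed
qed

end
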